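(* Let $X$ be a normal Hausdorff space which contains a subspace homeomorphic to $[0,1]$ (an arc). Then for any two distinct points $x,u\in X$ there is a continuous quotient surjection $f\colon X\to[0,1]$ with $f(x)=0$ and $f(u)=1$.
   Context: A surjection $f\colon X\to Y$ is a quotient map if for every $G\subseteq Y$, $G$ is open in $Y$ iff $f^{-1}(G)$ is open in $X$. A continuous quotient surjection $f\colon X\to[0,1]$ with $f(x)=0$, $f(u)=1$ is what the paper calls a quotient Urysohn function for $x$ and $u$. *)

theory Defs
  imports "HOL-Analysis.Analysis"
begin

end

theory Submission
  imports Defs
begin

theorem mainTheorem8:
  fixes X :: "'a topology" and x u :: 'a
  assumes "normal_space X" and "Hausdorff_space X"
    and "\<exists>S. S \<subseteq> topspace X \<and>
           subtopology X S homeomorphic_space top_of_set {0..1::real}"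
    and "x \<in> topspace X" and "u \<in> topspace X" and "x \<noteq> u"
  shows "\<exists>f. continuous_map X (top_of_set {0..1::real}) f \<and>
             f ` topspace X = {0..1} \<and>
             quotient_map X (top_of_set {0..1::real}) f \<and>
             f x = 0 \<and> f u = 1"
proof -
  obtain S where SX: "S \<subseteq> topspace X" and hS: "subtopology X S homeomorphic_space top_of_set {0..1::real}"
    using assms(3) by blast
  obtain h k where hk: "homeomorphic_maps (top_of_set {0..1::real}) (subtopology X S) h k"
    using hS homeomorphic_space_sym homeomorphic_space_def by metis
  have hcont: "continuous_map (top_of_set {0..1::real}) X h"
    using hk unfolding homeomorphic_maps_def by (meson continuous_map_from_subtopology_mono continuous_map_in_subtopology)
  have kh: "\<And>t. t \<in> {0..1} \<Longrightarrow> k (h t) = t"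
    using hk unfolding homeomorphic_maps_def by auto
  have kcont: "continuous_map (subtopology X S) euclideanreal k"
    using hk unfolding homeomorphic_maps_def by (meson continuous_map_in_subtopology)
  have hS': "\<And>t. t \<in> {0..1} \<Longrightarrow> h t \<in> S"
    using hk SX unfolding homeomorphic_maps_def continuous_map_def by auto
  have hinj: "\<And>s t. s \<in> {0..1} \<Longrightarrow> t \<in> {0..1} \<Longrightarrow> h s = h t \<Longrightarrow> s = t"
    by (metis kh)
  obtain a b :: real where ab: "0 \<le> a" "a < b" "b \<le> 1"
    and avoid: "\<And>t. t \<in> {a..b} \<Longrightarrow> h t \<noteq> x \<and> h t \<noteq> u"
  proof -
    have "\<exists>a b::real. 0 \<le> a \<and> a < b \<and> b \<le> 1 \<and> (\<forall>t\<in>{a..b}. h t \<noteq> x \<and> h t \<noteq> u)"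
    proof (rule ccontr)
      assume "\<not> ?thesis"
      then have bad: "\<And>a b::real. 0 \<le> a \<Longrightarrow> a < b \<Longrightarrow> b \<le> 1 \<Longrightarrow> \<exists>t\<in>{a..b}. h t = x \<or> h t = u"
        by blast
      obtain t1 where t1: "t1 \<in> {0..1/4}" "h t1 = x \<or> h t1 = u" using bad[of 0 "1/4"] by auto
      obtain t2 where t2: "t2 \<in> {3/8..5/8}" "h t2 = x \<or> h t2 = u" using bad[of "3/8" "5/8"] by auto
      obtain t3 where t3: "t3 \<in> {3/4..1}" "h t3 = x \<or> h t3 = u" using bad[of "3/4" 1] by auto
      have "t1 \<in> {0..1}" "t2 \<in> {0..1}" "t3 \<in> {0..1}" using t1 t2 t3 by auto
      then have "t1 = t2 \<or> t1 = t3 \<or> t2 = t3"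
        using t1(2) t2(2) t3(2) hinj by metis
      then show False using t1(1) t2(1) t3(1) by auto
    qed
    then show ?thesis using that by blast
  qed
  define T where "T = h ` {a..b}"
  have Tsub: "T \<subseteq> S" using hS' ab unfolding T_def by auto
  have "compactin (top_of_set {0..1::real}) {a..b}"
    using ab by (simp add: compactin_subtopology)
  then have Tcpt: "compactin X T" unfolding T_def using hcont image_compactin by blast
  have Tclo: "closedin X T" using compactin_imp_closedin[OF assms(2) Tcpt] .
  have xclo: "closedin X {x}" and uclo: "closedin X {u}"
    using assms closedin_Hausdorff_singleton by auto
  define C where "C = T \<union> {x} \<union> {u}"
  have Cclo: "closedin X C" unfolding C_def by (intro closedin_Un Tclo xclo uclo)
  define g where "g y = (if y = x then 0 else if y = u then 1 else (k y - a) / (b - a))" for y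
  have xT: "x \<notin> T" "u \<notin> T" using avoid unfolding T_def by fastforce+
  define TT where "TT i = (if i = (0::nat) then T else if i = 1 then {x} else {u})" for i
  define F where "F i y = (if i = (0::nat) then (k y - a) / (b - a) else if i = 1 then 0 else 1)" for i y
  have gcont: "continuous_map (subtopology X C) euclideanreal g"
  proof (rule pasting_lemma_closed[where I = "{0::nat,1,2}" and T = TT and f = F])
    fix i :: nat assume "i \<in> {0,1,2}"
    show "closedin (subtopology X C) (TT i)"
      using closedin_subset_topspace[OF Tclo, of C] closedin_subset_topspace[OF xclo, of C]
        closedin_subset_topspace[OF uclo, of C] by (auto simp: C_def TT_def)
    show "continuous_map (subtopology (subtopology X C) (TT i)) euclideanreal (F i)"
    proof (cases "i = 0")
      case True
      have "continuous_map (subtopology X T) euclideanreal k"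
        using kcont Tsub by (metis continuous_map_from_subtopology inf.absorb_iff2 subtopology_subtopology)
      then have "continuous_map (subtopology X T) euclideanreal (\<lambda>y. (k y - a) / (b - a))"
        using ab by (intro continuous_intros) auto
      moreover have "F i = (\<lambda>y. (k y - a) / (b - a))" using True by (auto simp: F_def)
      moreover have "C \<inter> T = T" by (auto simp: C_def)
      ultimately show ?thesis using True by (simp add: subtopology_subtopology TT_def)
    next
      case False
      then have "F i = (\<lambda>y. 0) \<or> F i = (\<lambda>y. 1)" by (auto simp: F_def fun_eq_iff)
      then show ?thesis by auto
    qed
  next
    fix i j y assume ij: "i \<in> {0::nat,1,2}" "j \<in> {0::nat,1,2}"
      and yy: "y \<in> topspace (subtopology X C) \<inter> TT i \<inter> TT j"
    have idx: "\<And>i. i \<in> {0::nat,1,2} \<Longrightarrow> y \<in> TT i \<Longrightarrow> i = (if y \<in> T then 0 else if y = x then 1 else 2)"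
    proof -
      fix i :: nat assume "i \<in> {0,1,2}" "y \<in> TT i"
      then consider "i = 0" "y \<in> T" | "i = 1" "y = x" | "i = 2" "y = u"
        unfolding TT_def by fastforce
      then show "i = (if y \<in> T then 0 else if y = x then 1 else 2)"
        using xT assms(6) by cases auto
    qed
    have yi: "y \<in> TT i" "y \<in> TT j" using yy by blast+
    have "i = j" using idx[OF ij(1) yi(1)] idx[OF ij(2) yi(2)] by argo
    then show "F i y = F j y" by simp
  next
    fix y assume "y \<in> topspace (subtopology X C)"
    then show "\<exists>j. j \<in> {0::nat,1,2} \<and> y \<in> TT j \<and> g y = F j y"
    proof -
      have yC: "y \<in> C" using \<open>y \<in> topspace (subtopology X C)\<close> by simp
      show ?thesis
      proof (cases "y = x")
        case True then show ?thesis by (rule_tac x=1 in exI) (simp add: TT_def F_def g_def)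
      next
        case nx: False
        show ?thesis
        proof (cases "y = u")
          case True then show ?thesis using nx by (rule_tac x=2 in exI) (simp add: TT_def F_def g_def)
        next
          case False
          then have "y \<in> T" using yC nx by (simp add: C_def)
          then show ?thesis using nx False by (rule_tac x=0 in exI) (simp add: TT_def F_def g_def)
        qed
      qed
    qed
  qed simp
  have gim: "g ` C \<subseteq> {0..1}"
  proof
    fix z assume "z \<in> g ` C"
    then obtain y where y: "y \<in> C" "z = g y" by auto
    show "z \<in> {0..1}"
    proof (cases "y = x \<or> y = u")
      case True then show ?thesis using y by (auto simp: g_def)
    next
      case False
      then obtain t where t: "t \<in> {a..b}" "y = h t" using y by (auto simp: C_def T_def)
      then have "k y = t" using kh ab by auto
      then have "z = (t - a) / (b - a)" using y False by (simp add: g_def)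
      moreover have "0 \<le> (t - a) / (b - a)" "(t - a) / (b - a) \<le> 1" using t ab by (auto simp: divide_simps)
      ultimately show ?thesis by simp
    qed
  qed
  obtain f where fcont: "continuous_map X euclideanreal f" and fC: "\<And>y. y \<in> C \<Longrightarrow> f y = g y"
    and fim: "f ` topspace X \<subseteq> {0..1}"
    using Tietze_extension_closed_real_interval[OF assms(1) Cclo gcont gim] by auto
  define \<phi> where "\<phi> s = h (a + s * (b - a))" for s :: real
  have affin: "\<And>s. s \<in> {0..1::real} \<Longrightarrow> a + s * (b - a) \<in> {a..b}"
  proof -
    fix s :: real assume "s \<in> {0..1}"
    then have "0 \<le> s * (b - a)" "s * (b - a) \<le> b - a"
      using ab by (auto simp: mult_left_le_one_le)
    then show "a + s * (b - a) \<in> {a..b}" by auto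
  qed
  have phicont: "continuous_map (top_of_set {0..1::real}) X \<phi>"
  proof -
    have "continuous_map (top_of_set {0..1::real}) (top_of_set {0..1::real}) (\<lambda>s. a + s * (b - a))"
      using affin ab by (force intro!: continuous_intros)
    from continuous_map_compose[OF this hcont] show ?thesis unfolding \<phi>_def by (simp add: o_def)
  qed
  have fphi: "\<And>s. s \<in> {0..1} \<Longrightarrow> f (\<phi> s) = s"
  proof -
    fix s :: real assume s: "s \<in> {0..1}"
    have in1: "a + s * (b - a) \<in> {a..b}" using affin s .
    then have "\<phi> s \<in> C" unfolding \<phi>_def C_def T_def by auto
    moreover have "\<phi> s \<noteq> x" "\<phi> s \<noteq> u" using avoid in1 unfolding \<phi>_def by auto
    moreover have "k (\<phi> s) = a + s * (b - a)" unfolding \<phi>_def using kh in1 ab by auto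
    ultimately show "f (\<phi> s) = s" using fC ab by (simp add: g_def field_simps)
  qed
  have phiX: "\<And>s. s \<in> {0..1} \<Longrightarrow> \<phi> s \<in> topspace X"
    using phicont by (auto simp: continuous_map_def)
  have fcont01: "continuous_map X (top_of_set {0..1::real}) f"
    using fcont fim by (auto simp add: continuous_map_in_subtopology)
  have fsurj: "f ` topspace X = {0..1}"
  proof
    show "{0..1} \<subseteq> f ` topspace X"
    proof
      fix s :: real assume "s \<in> {0..1}"
      then show "s \<in> f ` topspace X" using fphi phiX by (metis image_eqI)
    qed
  qed (use fim in auto)
  have fq: "quotient_map X (top_of_set {0..1::real}) f"
    unfolding quotient_map_def
  proof (intro conjI allI impI)
    show "f ` topspace X = topspace (top_of_set {0..1::real})" using fsurj by simp
  next
    fix U assume U: "U \<subseteq> topspace (top_of_set {0..1::real})"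
    show "openin X {y \<in> topspace X. f y \<in> U} = openin (top_of_set {0..1}) U"
    proof
      assume o: "openin X {y \<in> topspace X. f y \<in> U}"
      have "openin (top_of_set {0..1::real}) {s \<in> topspace (top_of_set {0..1::real}). \<phi> s \<in> {y \<in> topspace X. f y \<in> U}}"
        using openin_continuous_map_preimage[OF phicont o] by simp
      moreover have "{s \<in> topspace (top_of_set {0..1::real}). \<phi> s \<in> {y \<in> topspace X. f y \<in> U}} = U"
        using U fphi phiX by auto
      ultimately show "openin (top_of_set {0..1}) U" by simp
    next
      assume "openin (top_of_set {0..1}) U"
      then show "openin X {y \<in> topspace X. f y \<in> U}"
        using openin_continuous_map_preimage[OF fcont01] by blast
    qed
  qed
  have "f x = 0" "f u = 1" using fC assms(6) by (auto simp: C_def g_def)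
  then show ?thesis using fcont01 fsurj fq by blast
qed

end
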